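(* Let $\mathcal G=(V,E)$ be a finite connected undirected graph with strictly positive edge weights, let $d$ denote the weighted shortest-path distance, and let $\mathcal O\subseteq V$. Suppose that for every $u\in V$ there exist $o_1,o_2\in\mathcal O$ such that there is a unique shortest path $\mathcal P(o_1,o_2)$ between $o_1$ and $o_2$ and $u$ lies on $\mathcal P(o_1,o_2)$. Then $\mathcal O$ is a double resolving set of $\mathcal G$, i.e., for any two distinct nodes $x,y\in V$ there exist $u,v\in\mathcal O$ such that $d(x,u)-d(x,v)\neq d(y,u)-d(y,v)$.
   Context: A set $S\subseteq V$ is a double resolving set (DRS) of $\mathcal G$ if for any two distinct $x,y\in V$ there exist $u,v\in S$ with $d(x,u)-d(x,v)\ne d(y,u)-d(y,v)$. *)

theory Defs
  imports Complex_Main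
begin

definition weighted_graph :: "'a set \<Rightarrow> ('a \<Rightarrow> 'a \<Rightarrow> bool) \<Rightarrow> ('a \<Rightarrow> 'a \<Rightarrow> real) \<Rightarrow> bool" where
  "weighted_graph V E w \<longleftrightarrow> finite V
     \<and> (\<forall>x y. E x y \<longrightarrow> x \<in> V \<and> y \<in> V)
     \<and> (\<forall>x y. E x y \<longrightarrow> E y x)
     \<and> (\<forall>x. \<not> E x x)
     \<and> (\<forall>x y. E x y \<longrightarrow> w x y = w y x \<and> w x y > 0)"

definition is_path :: "'a set \<Rightarrow> ('a \<Rightarrow> 'a \<Rightarrow> bool) \<Rightarrow> 'a list \<Rightarrow> bool" where
  "is_path V E p \<longleftrightarrow> p \<noteq> [] \<and> set p \<subseteq> V \<and> (\<forall>i. Suc i < length p \<longrightarrow> E (p ! i) (p ! Suc i))"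

definition path_between :: "'a set \<Rightarrow> ('a \<Rightarrow> 'a \<Rightarrow> bool) \<Rightarrow> 'a \<Rightarrow> 'a \<Rightarrow> 'a list \<Rightarrow> bool" where
  "path_between V E x y p \<longleftrightarrow> is_path V E p \<and> hd p = x \<and> last p = y"

definition path_weight :: "('a \<Rightarrow> 'a \<Rightarrow> real) \<Rightarrow> 'a list \<Rightarrow> real" where
  "path_weight w p = (\<Sum>i<length p - 1. w (p ! i) (p ! Suc i))"

definition connected_graph :: "'a set \<Rightarrow> ('a \<Rightarrow> 'a \<Rightarrow> bool) \<Rightarrow> bool" where
  "connected_graph V E \<longleftrightarrow> (\<forall>x\<in>V. \<forall>y\<in>V. \<exists>p. path_between V E x y p)"

definition gdist :: "'a set \<Rightarrow> ('a \<Rightarrow> 'a \<Rightarrow> bool) \<Rightarrow> ('a \<Rightarrow> 'a \<Rightarrow> real) \<Rightarrow> 'a \<Rightarrow> 'a \<Rightarrow> real" where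
  "gdist V E w x y = Inf (path_weight w ` {p. path_between V E x y p})"

definition shortest_path :: "'a set \<Rightarrow> ('a \<Rightarrow> 'a \<Rightarrow> bool) \<Rightarrow> ('a \<Rightarrow> 'a \<Rightarrow> real) \<Rightarrow> 'a \<Rightarrow> 'a \<Rightarrow> 'a list \<Rightarrow> bool" where
  "shortest_path V E w x y p \<longleftrightarrow> path_between V E x y p \<and> path_weight w p = gdist V E w x y"

definition double_resolving_set :: "'a set \<Rightarrow> ('a \<Rightarrow> 'a \<Rightarrow> bool) \<Rightarrow> ('a \<Rightarrow> 'a \<Rightarrow> real) \<Rightarrow> 'a set \<Rightarrow> bool" where
  "double_resolving_set V E w S \<longleftrightarrow> S \<subseteq> V \<and>
     (\<forall>x\<in>V. \<forall>y\<in>V. x \<noteq> y \<longrightarrow> (\<exists>u\<in>S. \<exists>v\<in>S.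
        gdist V E w x u - gdist V E w x v \<noteq> gdist V E w y u - gdist V E w y v))"

end

theory Submission
  imports Defs
begin

lemma pw_nil[simp]: "path_weight w [] = 0" by (simp add: path_weight_def)
lemma pw_single[simp]: "path_weight w [a] = 0" by (simp add: path_weight_def)
lemma pw_cons2[simp]: "path_weight w (a#b#p) = w a b + path_weight w (b#p)"
  unfolding path_weight_def by (simp add: sum.lessThan_Suc_shift del: sum.lessThan_Suc)

lemma ip_single[simp]: "is_path V E [a] \<longleftrightarrow> a \<in> V" by (simp add: is_path_def)
lemma ip_cons2[simp]: "is_path V E (a#b#p) \<longleftrightarrow> a \<in> V \<and> E a b \<and> is_path V E (b#p)"
proof
  assume h: "is_path V E (a#b#p)"
  have "E a b" using h unfolding is_path_def by (metis Suc_less_eq length_Cons nth_Cons_0 nth_Cons_Suc zero_less_Suc)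
  moreover have "\<forall>i. Suc i < length (b#p) \<longrightarrow> E ((b#p) ! i) ((b#p) ! Suc i)"
  proof (intro allI impI)
    fix i assume "Suc i < length (b#p)"
    then have "Suc (Suc i) < length (a#b#p)" by simp
    then have "E ((a#b#p) ! Suc i) ((a#b#p) ! Suc (Suc i))" using h unfolding is_path_def by blast
    then show "E ((b#p) ! i) ((b#p) ! Suc i)" by simp
  qed
  ultimately show "a \<in> V \<and> E a b \<and> is_path V E (b#p)" using h unfolding is_path_def by auto
next
  assume h: "a \<in> V \<and> E a b \<and> is_path V E (b#p)"
  have "\<forall>i. Suc i < length (a#b#p) \<longrightarrow> E ((a#b#p) ! i) ((a#b#p) ! Suc i)"
  proof (intro allI impI)
    fix i assume i: "Suc i < length (a#b#p)"
    show "E ((a#b#p) ! i) ((a#b#p) ! Suc i)"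
    proof (cases i)
      case 0 then show ?thesis using h by simp
    next
      case (Suc k)
      then have "Suc k < length (b#p)" using i by simp
      then have "E ((b#p) ! k) ((b#p) ! Suc k)" using h unfolding is_path_def by blast
      then show ?thesis using Suc by simp
    qed
  qed
  then show "is_path V E (a#b#p)" using h unfolding is_path_def by auto
qed

lemma pw_append:
  "xs \<noteq> [] \<Longrightarrow> ys \<noteq> [] \<Longrightarrow>
   path_weight w (xs @ ys) = path_weight w xs + w (last xs) (hd ys) + path_weight w ys"
proof (induction xs rule: induct_list012)
  case 1 then show ?case by simp
next
  case (2 x) then show ?case by (cases ys) auto
next
  case (3 x y zs) then show ?case by simp
qed

lemma ip_append:
  "xs \<noteq> [] \<Longrightarrow> ys \<noteq> [] \<Longrightarrow>
   is_path V E (xs @ ys) \<longleftrightarrow> is_path V E xs \<and> E (last xs) (hd ys) \<and> is_path V E ys"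
proof (induction xs rule: induct_list012)
  case 1 then show ?case by simp
next
  case (2 x) then show ?case by (cases ys) auto
next
  case (3 x y zs) then show ?case by auto
qed

lemma concat_path:
  assumes "path_between V E x y A" "path_between V E y z B"
  shows "path_between V E x z (A @ tl B) \<and> path_weight w (A @ tl B) = path_weight w A + path_weight w B"
proof (cases "tl B")
  case Nil
  then have "B = [y]" using assms(2) unfolding path_between_def is_path_def by (cases B) auto
  then show ?thesis using assms Nil unfolding path_between_def by auto
next
  case (Cons b B')
  then have B: "B = y # b # B'" using assms(2) unfolding path_between_def is_path_def by (cases B) auto
  have A: "A \<noteq> []" "last A = y" using assms(1) unfolding path_between_def is_path_def by auto
  have "path_weight w (A @ tl B) = path_weight w A + w y b + path_weight w (b#B')"
    using pw_append[of A "b#B'" w] A B by simp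
  moreover have "is_path V E (A @ tl B)"
    using ip_append[of A "b#B'" V E] A B assms unfolding path_between_def by simp
  moreover have "hd (A @ tl B) = x" "last (A @ tl B) = z"
    using A B assms unfolding path_between_def by auto
  ultimately show ?thesis using B A unfolding path_between_def by simp
qed

lemma split_path:
  assumes "path_between V E a z P" "x \<in> set P"
  shows "\<exists>A B. P = A @ tl B \<and> path_between V E a x A \<and> path_between V E x z B"
  using assms
proof (induction P arbitrary: a)
  case Nil then show ?case by simp
next
  case (Cons c rest)
  have ca: "c = a" using Cons.prems unfolding path_between_def by simp
  show ?case
  proof (cases "c = x")
    case True
    have "x \<in> V" using Cons.prems True unfolding path_between_def is_path_def by auto
    then have "path_between V E a x [x]" using True ca unfolding path_between_def is_path_def by auto
    moreover have "c # rest = [x] @ tl (c # rest)" using True by simp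
    ultimately show ?thesis using Cons.prems True ca by blast
  next
    case False
    then have xr: "x \<in> set rest" using Cons.prems by simp
    then obtain b R' where r: "rest = b # R'" by (cases rest) auto
    have ip: "a \<in> V" "E a b" "is_path V E (b#R')" using Cons.prems r ca unfolding path_between_def by auto
    have "path_between V E b z rest" using Cons.prems r ip unfolding path_between_def by auto
    from Cons.IH[OF this xr] obtain A B where AB: "rest = A @ tl B" "path_between V E b x A" "path_between V E x z B" by blast
    obtain A' where A': "A = b # A'" using AB(2) unfolding path_between_def is_path_def by (cases A) auto
    have "path_between V E a x (a # A)" using AB(2) A' ip unfolding path_between_def by auto
    moreover have "c # rest = (a # A) @ tl B" using AB ca by simp
    ultimately show ?thesis using AB by blast
  qed
qed

lemma rev_path:
  assumes wg: "weighted_graph V E w"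
  shows "is_path V E p \<Longrightarrow> is_path V E (rev p) \<and> path_weight w (rev p) = path_weight w p"
proof (induction p rule: induct_list012)
  case 1 then show ?case by simp
next
  case (2 x) then show ?case by simp
next
  case (3 x y zs)
  have h: "x \<in> V" "E x y" "is_path V E (y#zs)" using 3 by auto
  have "E y x" "w y x = w x y" using wg h(2) unfolding weighted_graph_def by auto
  moreover have "rev (x#y#zs) = rev (y#zs) @ [x]" by simp
  moreover have "last (rev (y#zs)) = y" by simp
  ultimately show ?case using 3(2)[OF h(3)] pw_append[of "rev (y#zs)" "[x]" w]
      ip_append[of "rev (y#zs)" "[x]" V E] h by simp
qed

lemma gdist_sym:
  assumes wg: "weighted_graph V E w"
  shows "gdist V E w x y = gdist V E w y x"
proof -
  have "path_weight w ` {p. path_between V E x y p} \<subseteq> path_weight w ` {p. path_between V E y x p}"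
    if "True" for x y
  proof
    fix r assume "r \<in> path_weight w ` {p. path_between V E x y p}"
    then obtain p where p: "path_between V E x y p" "r = path_weight w p" by auto
    have "is_path V E (rev p)" "path_weight w (rev p) = path_weight w p"
      using rev_path[OF wg] p unfolding path_between_def by auto
    moreover have "hd (rev p) = y" "last (rev p) = x" using p unfolding path_between_def is_path_def
      by (auto simp: hd_rev last_rev)
    ultimately show "r \<in> path_weight w ` {p. path_between V E y x p}"
      using p unfolding path_between_def by (metis (mono_tags, lifting) image_eqI mem_Collect_eq)
  qed
  then have "path_weight w ` {p. path_between V E x y p} = path_weight w ` {p. path_between V E y x p}"
    by blast
  then show ?thesis unfolding gdist_def by simp
qed

lemma pw_nonneg_bound:
  assumes wg: "weighted_graph V E w" and "is_path V E p"
    and d: "\<And>a b. E a b \<Longrightarrow> \<delta> \<le> w a b"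
  shows "real (length p - 1) * \<delta> \<le> path_weight w p"
proof -
  have "(\<Sum>i<length p - 1. \<delta>) \<le> (\<Sum>i<length p - 1. w (p ! i) (p ! Suc i))"
  proof (rule sum_mono)
    fix i assume "i \<in> {..<length p - 1}"
    then have "Suc i < length p" by auto
    then show "\<delta> \<le> w (p ! i) (p ! Suc i)" using assms(2) d unfolding is_path_def by blast
  qed
  then show ?thesis unfolding path_weight_def by simp
qed

lemma pw_nonneg:
  assumes wg: "weighted_graph V E w" and "is_path V E p"
  shows "0 \<le> path_weight w p"
  using pw_nonneg_bound[OF wg assms(2), of 0] wg unfolding weighted_graph_def
  by (simp add: less_imp_le)

lemma gdist_le:
  assumes wg: "weighted_graph V E w" and "path_between V E x y p"
  shows "gdist V E w x y \<le> path_weight w p"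
  unfolding gdist_def
proof (rule cInf_lower)
  show "path_weight w p \<in> path_weight w ` {p. path_between V E x y p}" using assms by auto
  show "bdd_below (path_weight w ` {p. path_between V E x y p})"
    using pw_nonneg[OF wg] unfolding path_between_def bdd_below_def by auto
qed

lemma attain:
  assumes wg: "weighted_graph V E w" and p0: "path_between V E x y p0"
  shows "\<exists>p. shortest_path V E w x y p"
proof -
  define Ew where "Ew = {w a b | a b. E a b}"
  have "Ew \<subseteq> (\<lambda>(a,b). w a b) ` (V \<times> V)" using wg unfolding Ew_def weighted_graph_def by auto
  then have fE: "finite Ew" using wg unfolding weighted_graph_def by (meson finite_SigmaI finite_imageI finite_subset)
  define \<delta> where "\<delta> = Min (insert 1 Ew)"
  have dpos: "\<delta> > 0" unfolding \<delta>_def using fE wg unfolding Ew_def weighted_graph_def by auto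
  have dle: "\<delta> \<le> w a b" if "E a b" for a b
    unfolding \<delta>_def using fE that unfolding Ew_def by (intro Min_le) auto
  define N where "N = nat \<lceil>path_weight w p0 / \<delta>\<rceil> + length p0"
  define T where "T = {p. path_between V E x y p \<and> length p \<le> N}"
  have "T \<subseteq> {xs. set xs \<subseteq> V \<and> length xs \<le> N}" unfolding T_def path_between_def is_path_def by auto
  moreover have "finite V" using wg unfolding weighted_graph_def by simp
  ultimately have fT: "finite T" using finite_subset finite_lists_length_le by blast
  have p0T: "p0 \<in> T" unfolding T_def N_def using p0 by auto
  define m where "m = Min (path_weight w ` T)"
  have "m \<in> path_weight w ` T" unfolding m_def using fT p0T by (intro Min_in) auto
  then obtain pm where pm: "pm \<in> T" "path_weight w pm = m" by auto
  have mle: "m \<le> path_weight w p" if "path_between V E x y p" for p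
  proof (cases "length p \<le> N")
    case True
    then show ?thesis unfolding m_def using fT that T_def by (intro Min_le) auto
  next
    case False
    have "m \<le> path_weight w p0" unfolding m_def using fT p0T by (intro Min_le) auto
    also have "path_weight w p0 \<le> real N * \<delta>"
    proof -
      have "path_weight w p0 / \<delta> \<le> real N" unfolding N_def by linarith
      then show ?thesis using dpos by (simp add: divide_le_eq)
    qed
    also have "real N * \<delta> \<le> real (length p - 1) * \<delta>" using False dpos by simp
    also have "\<dots> \<le> path_weight w p"
      using pw_nonneg_bound[OF wg _ dle] that unfolding path_between_def by blast
    finally show ?thesis .
  qed
  have "gdist V E w x y = m" unfolding gdist_def
    by (rule cInf_eq_minimum) (use pm T_def mle in auto)
  then show ?thesis using pm unfolding shortest_path_def T_def by auto
qed

lemma pw_take: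
  assumes "k < length p"
  shows "path_weight w (take (Suc k) p) = (\<Sum>i<k. w (p!i) (p!Suc i))"
  unfolding path_weight_def using assms by (intro sum.cong) auto

lemma prefix_strict:
  assumes wg: "weighted_graph V E w" and ip: "is_path V E p"
  shows "i < j \<Longrightarrow> j < length p \<Longrightarrow> path_weight w (take (Suc i) p) < path_weight w (take (Suc j) p)"
proof (induction j)
  case 0 then show ?case by simp
next
  case (Suc j)
  have e: "E (p!j) (p!Suc j)" using ip Suc.prems unfolding is_path_def by blast
  then have pos: "w (p!j) (p!Suc j) > 0" using wg unfolding weighted_graph_def by blast
  have st: "path_weight w (take (Suc (Suc j)) p) = path_weight w (take (Suc j) p) + w (p!j) (p!Suc j)"
    using pw_take[of "Suc j" p w] pw_take[of j p w] Suc.prems by simp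
  show ?case
  proof (cases "i = j")
    case True then show ?thesis using st pos by simp
  next
    case False
    then have "path_weight w (take (Suc i) p) < path_weight w (take (Suc j) p)"
      using Suc by simp
    then show ?thesis using st pos by simp
  qed
qed

lemma prefix_eq:
  assumes wg: "weighted_graph V E w" and ip: "is_path V E R"
    and R1: "R = A @ tl B" and R2: "R = C @ tl F" and ne: "A \<noteq> []" "C \<noteq> []"
    and eq: "path_weight w A = path_weight w C"
  shows "last A = last C"
proof -
  have tA: "A = take (Suc (length A - 1)) R" using R1 ne by simp
  have tC: "C = take (Suc (length C - 1)) R" using R2 ne by simp
  have lA: "length A - 1 < length R" using ne(1) unfolding R1 by (cases A) auto
  have lC: "length C - 1 < length R" using ne(2) unfolding R2 by (cases C) auto
  have "length A - 1 = length C - 1"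
  proof (rule ccontr)
    assume "length A - 1 \<noteq> length C - 1"
    then consider "length A - 1 < length C - 1" | "length C - 1 < length A - 1" by linarith
    then show False
    proof cases
      case 1 then show False using prefix_strict[OF wg ip 1 lC] tA tC eq by simp
    next
      case 2 then show False using prefix_strict[OF wg ip 2 lA] tA tC eq by simp
    qed
  qed
  then have "A = C" using tA tC by metis
  then show ?thesis by simp
qed

lemma exists_sp:
  assumes wg: "weighted_graph V E w" and conn: "connected_graph V E" and "x \<in> V" "y \<in> V"
  shows "\<exists>p. shortest_path V E w x y p"
proof -
  obtain p where "path_between V E x y p" using conn assms(3,4) unfolding connected_graph_def by blast
  then show ?thesis using attain[OF wg] by blast
qed

lemma side:
  assumes wg: "weighted_graph V E w" and conn: "connected_graph V E"
    and V: "o1 \<in> V" "o2 \<in> V" "x \<in> V" "y \<in> V"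
    and allx: "\<forall>p. shortest_path V E w o1 o2 p \<longrightarrow> x \<in> set p"
    and eqn: "gdist V E w x o1 - gdist V E w x o2 = gdist V E w y o1 - gdist V E w y o2"
  shows "gdist V E w x o1 \<le> gdist V E w y o1 \<and> (gdist V E w x o1 = gdist V E w y o1 \<longrightarrow> x = y)"
proof -
  let ?D = "gdist V E w"
  have sym: "\<And>a b. ?D a b = ?D b a" using gdist_sym[OF wg] by blast
  obtain P where P: "shortest_path V E w o1 o2 P" using exists_sp[OF wg conn V(1,2)] by blast
  have xP: "x \<in> set P" using allx P by blast
  obtain Ax Bx where S: "P = Ax @ tl Bx" "path_between V E o1 x Ax" "path_between V E x o2 Bx"
    using split_path[OF _ xP] P unfolding shortest_path_def by blast
  have wP: "path_weight w P = path_weight w Ax + path_weight w Bx" using concat_path[OF S(2,3)] S(1) by simp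
  have t1: "?D o1 x + ?D x o2 \<le> ?D o1 o2"
    using gdist_le[OF wg S(2)] gdist_le[OF wg S(3)] wP P unfolding shortest_path_def by simp
  obtain A where A: "shortest_path V E w o1 y A" using exists_sp[OF wg conn V(1,4)] by blast
  obtain B where B: "shortest_path V E w y o2 B" using exists_sp[OF wg conn V(4,2)] by blast
  have R: "path_between V E o1 o2 (A @ tl B)" "path_weight w (A @ tl B) = ?D o1 y + ?D y o2"
    using concat_path[OF _ _ , of V E o1 y A o2 B w] A B unfolding shortest_path_def by auto
  have t2: "?D o1 o2 \<le> ?D o1 y + ?D y o2" using gdist_le[OF wg R(1)] R(2) by simp
  have le: "?D x o1 \<le> ?D y o1" using t1 t2 eqn sym[of o1 x] sym[of o1 y] by linarith
  moreover have "x = y" if e: "?D x o1 = ?D y o1"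
  proof -
    have e2: "?D x o2 = ?D y o2" using e eqn by linarith
    have Rsp: "shortest_path V E w o1 o2 (A @ tl B)"
      using R t1 t2 e e2 sym[of o1 x] sym[of o1 y] unfolding shortest_path_def by linarith
    have xR: "x \<in> set (A @ tl B)" using allx Rsp by blast
    obtain C F where S2: "A @ tl B = C @ tl F" "path_between V E o1 x C" "path_between V E x o2 F"
      using split_path[OF R(1) xR] by blast
    have wR: "path_weight w (A @ tl B) = path_weight w C + path_weight w F"
      using concat_path[OF S2(2,3)] S2(1) by simp
    have "?D o1 o2 \<le> ?D o1 x + ?D x o2" using t2 e e2 sym[of o1 x] sym[of o1 y] sym[of o2 x] sym[of o2 y] by linarith
    then have "path_weight w C = ?D o1 x"
      using gdist_le[OF wg S2(2)] gdist_le[OF wg S2(3)] wR Rsp t1 unfolding shortest_path_def by linarith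
    moreover have "path_weight w A = ?D o1 y" using A unfolding shortest_path_def by simp
    ultimately have "path_weight w A = path_weight w C" using e sym[of o1 x] sym[of o1 y] by simp
    moreover have "is_path V E (A @ tl B)" using R(1) unfolding path_between_def by simp
    moreover have "A \<noteq> []" "C \<noteq> []" using A S2(2) unfolding shortest_path_def path_between_def is_path_def by auto
    ultimately have "last A = last C" using prefix_eq[OF wg _ refl S2(1)] by blast
    then show "x = y" using A S2(2) unfolding shortest_path_def path_between_def by simp
  qed
  ultimately show ?thesis by blast
qed

theorem lemma2:
  fixes V :: "'a set" and E :: "'a \<Rightarrow> 'a \<Rightarrow> bool" and w :: "'a \<Rightarrow> 'a \<Rightarrow> real" and Obs :: "'a set"
  assumes "weighted_graph V E w"
    and "connected_graph V E"
    and "Obs \<subseteq> V"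
    and "\<forall>u\<in>V. \<exists>o1\<in>Obs. \<exists>o2\<in>Obs. (\<exists>!p. shortest_path V E w o1 o2 p) \<and>
            (\<forall>p. shortest_path V E w o1 o2 p \<longrightarrow> u \<in> set p)"
  shows "double_resolving_set V E w Obs"
  unfolding double_resolving_set_def
proof (intro conjI ballI impI)
  show "Obs \<subseteq> V" by fact
  fix x y assume x: "x \<in> V" and y: "y \<in> V" and xy: "x \<noteq> y"
  let ?D = "gdist V E w"
  show "\<exists>u\<in>Obs. \<exists>v\<in>Obs. ?D x u - ?D x v \<noteq> ?D y u - ?D y v"
  proof (rule ccontr)
    assume "\<not> ?thesis"
    then have neg: "\<forall>u\<in>Obs. \<forall>v\<in>Obs. ?D x u - ?D x v = ?D y u - ?D y v" by blast
    obtain o1 o2 where o: "o1 \<in> Obs" "o2 \<in> Obs" "\<forall>p. shortest_path V E w o1 o2 p \<longrightarrow> x \<in> set p"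
      using assms(4) x by blast
    obtain q1 q2 where q: "q1 \<in> Obs" "q2 \<in> Obs" "\<forall>p. shortest_path V E w q1 q2 p \<longrightarrow> y \<in> set p"
      using assms(4) y by blast
    have s1: "?D x o1 \<le> ?D y o1 \<and> (?D x o1 = ?D y o1 \<longrightarrow> x = y)"
      using side[OF assms(1,2) _ _ x y o(3)] o(1,2) assms(3) neg by blast
    have "?D y q1 - ?D y q2 = ?D x q1 - ?D x q2" using neg q by force
    then have s2: "?D y q1 \<le> ?D x q1"
      using side[OF assms(1,2) _ _ y x q(3)] q(1,2) assms(3) by blast
    have "?D x o1 - ?D x q1 = ?D y o1 - ?D y q1" using neg o q by blast
    then have "?D x o1 = ?D y o1" using s1 s2 by linarith
    then show False using s1 xy by blast
  qed
qed

end
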